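(* Let $N, L$ be positive integers, let $\hat{\mathbf Z}\in\mathbb R^{N\times L}$, let $\mathcal K=\{k_1,\dots,k_K\}\subseteq\{1,\dots,N\}$ be a nonempty index set with complement $\mathcal K^c$, and let $\mathbf x_{\mathcal K}\in\mathbb R^{K}$ be a given vector with nonzero entries. Write $\hat{\mathbf Z}_{\mathcal K}=\mathbf C_{\mathcal K}\hat{\mathbf Z}$ and $\hat{\mathbf Z}_{\mathcal K^c}=\mathbf C_{\mathcal K^c}\hat{\mathbf Z}$. Consider the best rank-one approximation of $\hat{\mathbf Z}$ given $\mathbf x_{\mathcal K}$, i.e. the problem $$\min_{\mathbf x\in\mathbb R^N,\ \mathbf h\in\mathbb R^L}\ \|\hat{\mathbf Z}-\mathbf x\mathbf h^T\|_F^2\quad\text{subject to}\quad \mathbf C_{\mathcal K}\mathbf x=\mathbf x_{\mathcal K}.$$ Then this best rank-one approximation is $$\begin{bmatrix}\hat{\mathbf Z}_{\mathcal K}\\ \hat{\mathbf Z}_{\mathcal K^c}\end{bmatrix}\approx\begin{bmatrix}\mathbf x_{\mathcal K}\\ \hat{\mathbf x}_{\mathcal K^c}\end{bmatrix}\hat{\mathbf h}^T,$$ where $\hat{\mathbf x}_{\mathcal K^c}=\hat{\mathbf Z}_{\mathcal K^c}\hat{\mathbf h}/\|\hat{\mathbf h}\|^2$ and $\hat{\mathbf h}=\big(\check{\mathbf h}^T\hat{\mathbf Z}_{\mathcal K}^T\mathbf x_{\mathcal K}/\|\mathbf x_{\mathcal K}\|^2\big)\check{\mathbf h}$, with $\check{\mathbf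 h}$ being the unit-norm principal eigenvector of $$\hat{\mathbf Z}_{\mathcal K^c}^T\hat{\mathbf Z}_{\mathcal K^c}+\frac{1}{\|\mathbf x_{\mathcal K}\|^2}\hat{\mathbf Z}_{\mathcal K}^T\mathbf x_{\mathcal K}\mathbf x_{\mathcal K}^T\hat{\mathbf Z}_{\mathcal K}.$$
   Context: For an index set $\mathcal A=\{a_1,\dots,a_m\}\subseteq\{1,\dots,N\}$, $\mathbf C_{\mathcal A}\in\{0,1\}^{m\times N}$ denotes the selection matrix whose rows are the canonical vectors $\mathbf e_{a_1}^T,\dots,\mathbf e_{a_m}^T$, so $\mathbf C_{\mathcal A}\mathbf x$ collects the entries of $\mathbf x$ indexed by $\mathcal A$. $\|\cdot\|_F$ is the Frobenius norm and $\|\cdot\|$ the Euclidean norm. (In the paper, $\hat{\mathbf Z}$ is an estimate of the rank-one matrix $\mathbf x\mathbf h^T$ with $\mathbf x$ a graph input signal and $\mathbf h$ graph filter coefficients, and $\mathbf x_{\mathcal K}$ are known nonzero input values.) *)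

theory Defs
  imports "HOL-Analysis.Analysis"
begin

text \<open>Vectors in R^N are real^'n, N x L matrices are real^'l^'n (rows indexed by 'n).
  norm on real^'l^'n is the Frobenius norm.\<close>

text \<open>C_A^T C_A v : keeps the entries of v indexed by A, zeroes the others.
  Norms and products of C_A v are those of this masked vector.\<close>
definition mask_vec :: "'n set \<Rightarrow> real^'n \<Rightarrow> real^'n" where
  "mask_vec A v = (\<chi> i. if i \<in> A then v $ i else 0)"

text \<open>C_A^T C_A Z : keeps the rows of Z indexed by A, zeroes the others.\<close>
definition mask_rows :: "'n set \<Rightarrow> real^'l^'n \<Rightarrow> real^'l^'n" where
  "mask_rows A Z = (\<chi> i. if i \<in> A then Z $ i else 0)"

definition outer :: "real^'n \<Rightarrow> real^'l \<Rightarrow> real^'l^'n" where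
  "outer x h = (\<chi> i j. x $ i * h $ j)"

definition principal_eigvec :: "real^'l^'l \<Rightarrow> real^'l \<Rightarrow> bool" where
  "principal_eigvec M v \<longleftrightarrow> norm v = 1 \<and>
     (\<exists>lam. M *v v = lam *\<^sub>R v \<and>
        (\<forall>\<mu> w. w \<noteq> 0 \<and> M *v w = \<mu> *\<^sub>R w \<longrightarrow> \<mu> \<le> lam))"

end

theory Submission imports Defs begin

lemma rayleigh:
  fixes M :: "real^'l^'l"
  assumes sym: "\<And>v w. v \<bullet> (M *v w) = w \<bullet> (M *v v)"
    and ev: "\<And>\<mu> w. w \<noteq> 0 \<Longrightarrow> M *v w = \<mu> *\<^sub>R w \<Longrightarrow> \<mu> \<le> lam"
  shows "w \<bullet> (M *v w) \<le> lam * (w \<bullet> w)"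
proof -
  define q where "q = (\<lambda>w. w \<bullet> (M *v w))"
  have cont: "continuous_on (sphere 0 1) q"
    unfolding q_def
    by (intro continuous_intros linear_continuous_on bounded_linear.bounded_linear matrix_vector_mul_bounded_linear)
  have "sphere (0::real^'l) 1 \<noteq> {}"
    using norm_axis_1 by (metis mem_sphere_0 empty_iff)
  then obtain u where u: "u \<in> sphere 0 1" and umax: "\<And>y. y \<in> sphere 0 1 \<Longrightarrow> q y \<le> q u"
    using continuous_attains_sup[OF compact_sphere _ cont] by blast
  define \<mu> where "\<mu> = q u"
  have nu: "norm u = 1" using u by simp
  have uu: "u \<bullet> u = 1" using nu by (simp add: power2_norm_eq_inner[symmetric])
  have qscale: "q (c *\<^sub>R y) = c^2 * q y" for c y
    by (simp add: q_def matrix_vector_mult_scaleR power2_eq_square)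
  have bound: "q y \<le> \<mu> * (y \<bullet> y)" for y
  proof (cases "y = 0")
    case True then show ?thesis by (simp add: q_def)
  next
    case False
    then have n: "norm y > 0" by simp
    have "q ((1 / norm y) *\<^sub>R y) \<le> \<mu>" unfolding \<mu>_def using False by (intro umax) simp
    then have "q y / (norm y)^2 \<le> \<mu>" by (simp add: qscale power_divide)
    then have "q y \<le> \<mu> * (norm y)^2" using n by (simp add: divide_le_eq)
    then show ?thesis by (simp add: power2_norm_eq_inner)
  qed
  define v where "v = M *v u - \<mu> *\<^sub>R u"
  define c where "c = v \<bullet> v"
  define d where "d = \<mu> * (v \<bullet> v) - q v"
  have d0: "d \<ge> 0" using bound[of v] by (simp add: d_def)
  have expand: "q (u + t *\<^sub>R v) = q u + 2 * t * (v \<bullet> (M *v u)) + t^2 * q v" for t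
    using sym[of u v] by (simp add: q_def algebra_simps inner_add_left inner_add_right matrix_vector_mult_scaleR power2_eq_square)
  have key: "2 * t * c \<le> t^2 * d" for t
  proof -
    have "q (u + t *\<^sub>R v) \<le> \<mu> * ((u + t *\<^sub>R v) \<bullet> (u + t *\<^sub>R v))" by (rule bound)
    moreover have "(u + t *\<^sub>R v) \<bullet> (u + t *\<^sub>R v) = 1 + 2 * t * (u \<bullet> v) + t^2 * (v \<bullet> v)"
      using uu by (simp add: inner_add_left inner_add_right inner_commute power2_eq_square algebra_simps)
    moreover have "c = v \<bullet> (M *v u) - \<mu> * (u \<bullet> v)"
    proof -
      have "v \<bullet> v = v \<bullet> (M *v u - \<mu> *\<^sub>R u)" by (simp add: v_def)
      then show ?thesis unfolding c_def by (simp add: inner_diff_right inner_commute)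
    qed
    ultimately have h1: "\<mu> + 2 * t * (v \<bullet> (M *v u)) + t^2 * q v \<le> \<mu> * (1 + 2 * t * (u \<bullet> v) + t^2 * (v \<bullet> v))"
      and h2: "c = v \<bullet> (M *v u) - \<mu> * (u \<bullet> v)"
      unfolding expand \<mu>_def by auto
    have "2 * t * c = 2 * t * (v \<bullet> (M *v u)) - 2 * t * \<mu> * (u \<bullet> v)" unfolding h2 by (simp add: algebra_simps)
    moreover have "t^2 * d = \<mu> * t^2 * (v \<bullet> v) - t^2 * q v" by (simp add: d_def algebra_simps)
    moreover have "\<mu> * (1 + 2 * t * (u \<bullet> v) + t^2 * (v \<bullet> v)) = \<mu> + 2 * t * \<mu> * (u \<bullet> v) + \<mu> * t^2 * (v \<bullet> v)"
      by (simp add: algebra_simps)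
    ultimately show ?thesis using h1 by linarith
  qed
  have "c = 0"
  proof (rule ccontr)
    assume "c \<noteq> 0"
    then have cp: "c > 0" by (simp add: c_def)
    have "2 * (c/(d+1)) * c \<le> (c/(d+1))^2 * d" by (rule key)
    then have "(2 * (c/(d+1)) * c) * (d+1)^2 \<le> ((c/(d+1))^2 * d) * (d+1)^2"
      by (rule mult_right_mono) simp
    moreover have "(2 * (c/(d+1)) * c) * (d+1)^2 = 2 * c * c * (d+1)" using d0
      by (simp add: power2_eq_square field_simps)
    moreover have "((c/(d+1))^2 * d) * (d+1)^2 = c * c * d"
    proof -
      have "(d+1)^2 \<noteq> 0" using d0 by simp
      then show ?thesis by (simp add: power_divide power2_eq_square[of c])
    qed
    ultimately have "2 * c * c * (d+1) \<le> c * c * d" by simp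
    then have "0 \<le> c * c * (- d - 2)" by (simp add: algebra_simps)
    moreover have "c * c * (- d - 2) < 0" using cp d0 by (intro mult_pos_neg) auto
    ultimately show False by simp
  qed
  then have "M *v u = \<mu> *\<^sub>R u" by (simp add: c_def v_def)
  moreover have "u \<noteq> 0" using nu by auto
  ultimately have "\<mu> \<le> lam" by (rule ev[rotated])
  have "q w \<le> \<mu> * (w \<bullet> w)" by (rule bound)
  also have "\<dots> \<le> lam * (w \<bullet> w)" using \<open>\<mu> \<le> lam\<close> by (simp add: mult_right_mono)
  finally show ?thesis by (simp add: q_def)
qed


lemma norm_sq_mat: "(norm (A::real^'l^'n))^2 = (\<Sum>i\<in>UNIV. (norm (A$i))^2)"
  unfolding norm_vec_def L2_set_def by (simp add: sum_nonneg)

lemma row_diff_outer: "(Z - outer x h) $ i = Z $ i - (x $ i) *\<^sub>R h"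
  by (simp add: outer_def vec_eq_iff)

lemma norm_sq_diff: "(norm (y - c *\<^sub>R (h::real^'l)))^2 = (norm y)^2 - 2 * c * (y \<bullet> h) + c^2 * (norm h)^2"
  unfolding power2_norm_eq_inner by (simp add: inner_diff_left inner_diff_right inner_commute power2_eq_square algebra_simps)

lemma mv_comp: "((A::real^'l^'n) *v w) $ i = A $ i \<bullet> w"
  by (simp add: matrix_vector_mult_def inner_vec_def)

lemma tmv: "transpose (A::real^'l^'n) *v y = (\<Sum>i\<in>UNIV. (y $ i) *\<^sub>R A $ i)"
  by (simp add: vec_eq_iff matrix_vector_mult_def transpose_def sum_component mult.commute)

lemma outer_mv: "outer a (a::real^'l) *v w = (a \<bullet> w) *\<^sub>R a"
  by (simp add: vec_eq_iff matrix_vector_mult_def outer_def inner_vec_def sum_distrib_left mult.commute mult.left_commute)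

lemma a_eq: "transpose (mask_rows K (Z::real^'l^'n)) *v mask_vec K xK = (\<Sum>i\<in>K. (xK $ i) *\<^sub>R Z $ i)"
proof -
  have "transpose (mask_rows K Z) *v mask_vec K xK = (\<Sum>i\<in>UNIV. (if i \<in> K then (xK $ i) *\<^sub>R Z $ i else 0))"
    unfolding tmv by (intro sum.cong) (auto simp: mask_vec_def mask_rows_def)
  also have "\<dots> = (\<Sum>i\<in>K. (xK $ i) *\<^sub>R Z $ i)"
    by (simp add: sum.If_cases)
  finally show ?thesis .
qed

lemma BtB: "(transpose (mask_rows (- K) (Z::real^'l^'n)) ** mask_rows (- K) Z) *v w
   = (\<Sum>i\<in>-K. (Z $ i \<bullet> w) *\<^sub>R Z $ i)"
proof -
  have "(transpose (mask_rows (- K) Z) ** mask_rows (- K) Z) *v w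
      = transpose (mask_rows (- K) Z) *v (mask_rows (- K) Z *v w)"
    by (simp add: matrix_vector_mul_assoc)
  also have "\<dots> = (\<Sum>i\<in>UNIV. (if i \<in> -K then (Z $ i \<bullet> w) *\<^sub>R Z $ i else 0))"
    unfolding tmv by (intro sum.cong) (auto simp: mv_comp mask_rows_def)
  also have "\<dots> = (\<Sum>i\<in>-K. (Z $ i \<bullet> w) *\<^sub>R Z $ i)"
    by (simp add: sum.If_cases Compl_eq)
  finally show ?thesis .
qed


theorem proposition1:
  fixes Z :: "real^'l^'n" and K :: "'n set" and xK :: "real^'n"
    and hc hh :: "real^'l" and xh :: "real^'n"
  assumes K_ne: "K \<noteq> {}"
    and xK_nz: "\<forall>k\<in>K. xK $ k \<noteq> 0"
    and hc: "principal_eigvec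
       (transpose (mask_rows (- K) Z) ** mask_rows (- K) Z
        + (1 / (norm (mask_vec K xK))\<^sup>2) *\<^sub>R
            outer (transpose (mask_rows K Z) *v mask_vec K xK)
                  (transpose (mask_rows K Z) *v mask_vec K xK)) hc"
    and hh: "hh = ((hc \<bullet> (transpose (mask_rows K Z) *v mask_vec K xK))
                    / (norm (mask_vec K xK))\<^sup>2) *\<^sub>R hc"
    and hh_nz: "hh \<noteq> 0"
    and xh: "xh = (\<chi> i. if i \<in> K then xK $ i else (Z *v hh) $ i / (norm hh)\<^sup>2)"
  shows "(\<forall>k\<in>K. xh $ k = xK $ k) \<and>
         (\<forall>x h. (\<forall>k\<in>K. x $ k = xK $ k) \<longrightarrow>
            (norm (Z - outer xh hh))\<^sup>2 \<le> (norm (Z - outer x h))\<^sup>2)"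
proof -
  define a where "a = transpose (mask_rows K Z) *v mask_vec K xK"
  define s where "s = (norm (mask_vec K xK))\<^sup>2"
  define M where "M = transpose (mask_rows (- K) Z) ** mask_rows (- K) Z + (1 / s) *\<^sub>R outer a a"
  define Q where "Q = (\<lambda>w. (\<Sum>i\<in>-K. (Z $ i \<bullet> w)^2) + (a \<bullet> w)^2 / s)"
  have a_def': "a = (\<Sum>i\<in>K. (xK $ i) *\<^sub>R Z $ i)" unfolding a_def by (rule a_eq)
  have s_eq: "s = (\<Sum>i\<in>K. (xK $ i)^2)"
  proof -
    have "s = (\<Sum>i\<in>UNIV. (mask_vec K xK $ i)^2)"
      unfolding s_def power2_norm_eq_inner inner_vec_def by (simp add: power2_eq_square)
    also have "\<dots> = (\<Sum>i\<in>UNIV. if i \<in> K then (xK $ i)^2 else 0)"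
      by (intro sum.cong) (auto simp: mask_vec_def)
    finally show ?thesis by (simp add: sum.If_cases)
  qed
  obtain k where "k \<in> K" using K_ne by blast
  have s_pos: "s > 0"
  proof -
    have "(xK $ k)^2 > 0" using xK_nz \<open>k \<in> K\<close> by simp
    also have "(xK $ k)^2 \<le> (\<Sum>i\<in>K. (xK $ i)^2)"
      using \<open>k \<in> K\<close> by (intro member_le_sum) auto
    finally show ?thesis using s_eq by simp
  qed
  have Mv: "M *v w = (\<Sum>i\<in>-K. (Z $ i \<bullet> w) *\<^sub>R Z $ i) + ((a \<bullet> w) / s) *\<^sub>R a" for w
    unfolding M_def by (simp add: matrix_vector_mult_add_rdistrib BtB scaleR_matrix_vector_assoc[symmetric] outer_mv)
  have vMw: "v \<bullet> (M *v w) = (\<Sum>i\<in>-K. (Z $ i \<bullet> w) * (Z $ i \<bullet> v)) + (a \<bullet> w) * (a \<bullet> v) / s" for v w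
    unfolding Mv by (simp add: inner_add_right inner_sum_right inner_commute)
  have sym: "v \<bullet> (M *v w) = w \<bullet> (M *v v)" for v w
    unfolding vMw by (simp add: mult.commute)
  have QM: "Q w = w \<bullet> (M *v w)" for w
    unfolding vMw Q_def by (simp add: power2_eq_square)
  from hc obtain lam where hc1: "norm hc = 1" and eig: "M *v hc = lam *\<^sub>R hc"
    and lmax: "\<And>\<mu> w. w \<noteq> 0 \<Longrightarrow> M *v w = \<mu> *\<^sub>R w \<Longrightarrow> \<mu> \<le> lam"
    unfolding principal_eigvec_def M_def a_def s_def by blast
  have hchc: "hc \<bullet> hc = 1" using hc1 by (simp add: power2_norm_eq_inner[symmetric])
  have Qhc: "Q hc = lam" unfolding QM eig using hchc by simp
  have Qle: "Q w \<le> lam * (w \<bullet> w)" for w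
    unfolding QM by (rule rayleigh[OF sym lmax])
  have Q0: "Q w \<ge> 0" for w
    unfolding Q_def using s_pos by (intro add_nonneg_nonneg sum_nonneg) auto
  define T where "T = (\<Sum>i\<in>UNIV. (norm (Z $ i))^2)"
  have F: "(norm (Z - outer x h))^2 = T - 2 * (a \<bullet> h) + s * (norm h)^2
        + (\<Sum>i\<in>-K. - 2 * x $ i * (Z $ i \<bullet> h) + (x $ i)^2 * (norm h)^2)"
    if xK: "\<forall>k\<in>K. x $ k = xK $ k" for x h
  proof -
    have "(norm (Z - outer x h))^2 = (\<Sum>i\<in>UNIV. (norm (Z $ i))^2 - 2 * x $ i * (Z $ i \<bullet> h) + (x $ i)^2 * (norm h)^2)"
      unfolding norm_sq_mat row_diff_outer norm_sq_diff ..
    also have "\<dots> = T + (\<Sum>i\<in>UNIV. - 2 * x $ i * (Z $ i \<bullet> h) + (x $ i)^2 * (norm h)^2)"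
      unfolding T_def sum.distrib[symmetric] by (rule sum.cong) (simp_all add: algebra_simps)
    also have "(\<Sum>i\<in>UNIV. - 2 * x $ i * (Z $ i \<bullet> h) + (x $ i)^2 * (norm h)^2)
        = (\<Sum>i\<in>K. - 2 * x $ i * (Z $ i \<bullet> h) + (x $ i)^2 * (norm h)^2)
        + (\<Sum>i\<in>-K. - 2 * x $ i * (Z $ i \<bullet> h) + (x $ i)^2 * (norm h)^2)"
      by (subst sum.union_disjoint[symmetric]) auto
    also have "(\<Sum>i\<in>K. - 2 * x $ i * (Z $ i \<bullet> h) + (x $ i)^2 * (norm h)^2)
        = - 2 * (a \<bullet> h) + s * (norm h)^2"
    proof -
      have "(\<Sum>i\<in>K. - 2 * x $ i * (Z $ i \<bullet> h) + (x $ i)^2 * (norm h)^2)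
          = (\<Sum>i\<in>K. - 2 * (xK $ i * (Z $ i \<bullet> h))) + (\<Sum>i\<in>K. (xK $ i)^2 * (norm h)^2)"
        unfolding sum.distrib[symmetric] using xK by (intro sum.cong) auto
      also have "\<dots> = - 2 * (\<Sum>i\<in>K. xK $ i * (Z $ i \<bullet> h)) + (\<Sum>i\<in>K. (xK $ i)^2) * (norm h)^2"
        by (simp add: sum_distrib_left sum_distrib_right)
      finally show ?thesis unfolding a_def' s_eq by (simp add: inner_sum_left)
    qed
    finally show ?thesis by simp
  qed
  define t where "t = (hc \<bullet> a) / s"
  have hh': "hh = t *\<^sub>R hc" unfolding hh t_def a_def s_def ..
  have tnz: "t \<noteq> 0" using hh_nz hh' by auto
  have nhh: "(norm hh)^2 = t^2" unfolding hh' using hc1 by (simp add: power_mult_distrib)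
  have ahc: "a \<bullet> hc = t * s" using s_pos unfolding t_def by (simp add: inner_commute)
  have xhK: "\<forall>k\<in>K. xh $ k = xK $ k" unfolding xh by simp
  have xhc: "xh $ i = (Z $ i \<bullet> hc) / t" if "i \<notin> K" for i
    using that tnz unfolding xh nhh by (simp add: mv_comp hh' power2_eq_square)
  have opt: "(norm (Z - outer xh hh))^2 = T - lam"
  proof -
    have "(\<Sum>i\<in>-K. - 2 * xh $ i * (Z $ i \<bullet> hh) + (xh $ i)^2 * (norm hh)^2)
        = (\<Sum>i\<in>-K. - ((Z $ i \<bullet> hc)^2))"
    proof (intro sum.cong refl)
      fix i assume "i \<in> - K"
      then have "xh $ i = (Z $ i \<bullet> hc) / t" using xhc by simp
      moreover have "Z $ i \<bullet> hh = t * (Z $ i \<bullet> hc)" unfolding hh' by simp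
      ultimately show "- 2 * xh $ i * (Z $ i \<bullet> hh) + (xh $ i)^2 * (norm hh)^2 = - ((Z $ i \<bullet> hc)^2)"
        unfolding nhh using tnz by (simp add: power2_eq_square field_simps)
    qed
    moreover have "- 2 * (a \<bullet> hh) + s * (norm hh)^2 = - ((a \<bullet> hc)^2 / s)"
      using s_pos unfolding nhh hh' by (simp add: ahc power2_eq_square hc1 abs_mult_self_eq)
    ultimately show ?thesis unfolding F[OF xhK] Qhc[symmetric] Q_def
      by (simp add: sum_negf)
  qed
  have lower: "T - lam \<le> (norm (Z - outer x h))^2" if xK: "\<forall>k\<in>K. x $ k = xK $ k" for x h
  proof (cases "h = 0")
    case True
    have "lam \<ge> 0" using Q0[of hc] Qhc by simp
    then show ?thesis unfolding F[OF xK] True by simp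
  next
    case False
    define n where "n = (norm h)^2"
    have np: "n > 0" using False by (simp add: n_def)
    have hhn: "h \<bullet> h = n" by (simp add: n_def power2_norm_eq_inner)
    have trm: "- 2 * y * c + y^2 * n \<ge> - (c^2 / n)" for y c
    proof -
      have "0 \<le> (y * n - c)^2" by simp
      then have "0 \<le> n * (- 2 * y * c + y^2 * n) + c^2" by (simp add: power2_eq_square algebra_simps)
      then have "- (c^2) \<le> n * (- 2 * y * c + y^2 * n)" by simp
      then have "(- (c^2)) / n \<le> - 2 * y * c + y^2 * n" using np by (subst pos_divide_le_eq) (simp_all add: mult.commute)
      then show ?thesis by simp
    qed
    have sn: "- 2 * (a \<bullet> h) + s * n \<ge> - ((a \<bullet> h)^2 / s / n)"
    proof -
      have snp: "s * n > 0" using s_pos np by simp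
      have "0 \<le> (s * n - a \<bullet> h)^2" by simp
      then have "- ((a \<bullet> h)^2) \<le> (s * n) * (- 2 * (a \<bullet> h) + s * n)"
        by (simp add: power2_eq_square algebra_simps)
      then have "(- ((a \<bullet> h)^2)) / (s * n) \<le> - 2 * (a \<bullet> h) + s * n"
        using snp by (subst pos_divide_le_eq) (simp_all add: mult.commute)
      then show ?thesis by (simp add: divide_divide_eq_left)
    qed
    have "(\<Sum>i\<in>-K. - ((Z $ i \<bullet> h)^2 / n)) \<le> (\<Sum>i\<in>-K. - 2 * x $ i * (Z $ i \<bullet> h) + (x $ i)^2 * n)"
      by (intro sum_mono trm)
    then have "T - Q h / n \<le> (norm (Z - outer x h))^2"
      unfolding F[OF xK] n_def[symmetric] Q_def using sn
      by (simp add: sum_negf add_divide_distrib sum_divide_distrib)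
    moreover have "Q h / n \<le> lam" using Qle[of h] np unfolding hhn by (simp add: divide_le_eq)
    ultimately show ?thesis by linarith
  qed
  show ?thesis using xhK opt lower by simp
qed

end
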